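(* Let $p\ge2$, $q\ge2$, and let $\mathcal M_{\mathrm{reg}}$, $\mathcal M_i$ and $\mathcal A_{\mathrm{class}}$ be as in the context. Let $\tilde a,\tilde b\in\mathcal M_{\mathrm{reg}}$ be such that there is no $i\in\{1,\dots,p\}$ with $\tilde a\in\mathcal M_i$ and $\tilde b\in\mathcal M_i$. Then some function in $\mathcal A_{\mathrm{class}}$ takes different values at $\tilde a$ and $\tilde b$.
   Context: Let $\Gamma=\mathbb{R}^{2(p+q)}$ with coordinates $(\boldsymbol u,\boldsymbol p,\boldsymbol v,\boldsymbol\pi)$, $\boldsymbol u,\boldsymbol p\in\mathbb{R}^p$, $\boldsymbol v,\boldsymbol\pi\in\mathbb{R}^q$. Let $\bar\Gamma$ be the set where $H_1=\tfrac12(\boldsymbol p^2-\boldsymbol v^2)$, $H_2=\tfrac12(\boldsymbol\pi^2-\boldsymbol u^2)$ and $D=\boldsymbol u\cdot\boldsymbol p-\boldsymbol v\cdot\boldsymbol\pi$ all vanish. ${\mathrm{SL}}(2,\mathbb{R})$ acts on $\Gamma$ by $(\boldsymbol u,\boldsymbol p)^T\mapsto g(\boldsymbol u,\boldsymbol p)^T$, $(\boldsymbol\pi,\boldsymbol v)^T\mapsto g(\boldsymbol\pi,\boldsymbol v)^T$ (acting componentwise on the pairs $(u_i,p_i)$, $(\pi_j,v_j)$), preserving $\bar\Gamma$. Let $\bar\Gamma_{\mathrm{reg}}$ be the set of points of $\bar\Gamma$ at which both pairs $(\boldsymbol u,\boldsymbol p)$ and $(\boldsymbol v,\boldsymbol\pi)$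 are linearly independent, and $\mathcal M_{\mathrm{reg}}=\bar\Gamma_{\mathrm{reg}}/{\mathrm{SL}}(2,\mathbb{R})$. For $x_k=(u_k,p_k)$ ($1\le k\le p$) and $x_{p+k}=(\pi_k,v_k)$ ($1\le k\le q$), set $\mathcal O_{kj}=x_k\times x_j$ (the scalar cross product on $\mathbb{R}^2$); these are gauge invariant, and $\mathcal A_{\mathrm{class}}$ is the algebra of functions on $\mathcal M_{\mathrm{reg}}$ generated by them. For $1\le i\le p$, $\mathcal M_i$ is the set of points of $\mathcal M_{\mathrm{reg}}$ having a representative satisfying $\boldsymbol u^2=\boldsymbol p^2=\boldsymbol v^2=\boldsymbol\pi^2>0$, $\boldsymbol u\cdot\boldsymbol p=\boldsymbol v\cdot\boldsymbol\pi=0$ and $u_i^2+p_i^2>0$. *)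

theory Defs
  imports "HOL-Analysis.Analysis"
begin

text \<open>A point of Gamma = R^(2(p+q)): coordinates (u, pp, v, pi) with u, pp in R^p and (pv = pi)
  v, pv in R^q.  The dimensions p and q are the cardinalities of the finite index types.\<close>
type_synonym ('p,'q) pt = "(real^'p) \<times> (real^'p) \<times> (real^'q) \<times> (real^'q)"

definition H1 :: "('p::finite,'q::finite) pt \<Rightarrow> real" where
  "H1 x = (case x of (u,pp,v,pv) \<Rightarrow> (pp \<bullet> pp - v \<bullet> v) / 2)"

definition H2 :: "('p::finite,'q::finite) pt \<Rightarrow> real" where
  "H2 x = (case x of (u,pp,v,pv) \<Rightarrow> (pv \<bullet> pv - u \<bullet> u) / 2)"

definition Dc :: "('p::finite,'q::finite) pt \<Rightarrow> real" where
  "Dc x = (case x of (u,pp,v,pv) \<Rightarrow> u \<bullet> pp - v \<bullet> pv)"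

definition Gamma_bar :: "('p::finite,'q::finite) pt set" where
  "Gamma_bar = {x. H1 x = 0 \<and> H2 x = 0 \<and> Dc x = 0}"

definition lin_indep2 :: "'a::real_vector \<Rightarrow> 'a \<Rightarrow> bool" where
  "lin_indep2 x y \<longleftrightarrow> (\<forall>a b. a *\<^sub>R x + b *\<^sub>R y = 0 \<longrightarrow> a = 0 \<and> b = 0)"

definition Gamma_reg :: "('p::finite,'q::finite) pt set" where
  "Gamma_reg = {x \<in> Gamma_bar. case x of (u,pp,v,pv) \<Rightarrow> lin_indep2 u pp \<and> lin_indep2 v pv}"

definition sl2_act :: "real^2^2 \<Rightarrow> ('p::finite,'q::finite) pt \<Rightarrow> ('p,'q) pt" where
  "sl2_act g x = (case x of (u,pp,v,pv) \<Rightarrow>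
     ((\<chi> i. g$1$1 * u$i + g$1$2 * pp$i),
      (\<chi> i. g$2$1 * u$i + g$2$2 * pp$i),
      (\<chi> j. g$2$1 * pv$j + g$2$2 * v$j),
      (\<chi> j. g$1$1 * pv$j + g$1$2 * v$j)))"

text \<open>The 2-vectors x_k = (u_k,p_k) (index Inl k) and x_{p+k} = (pi_k,v_k) (index Inr k).\<close>
definition xvec :: "('p::finite,'q::finite) pt \<Rightarrow> 'p + 'q \<Rightarrow> real \<times> real" where
  "xvec x k = (case x of (u,pp,v,pv) \<Rightarrow>
     (case k of Inl i \<Rightarrow> (u$i, pp$i) | Inr j \<Rightarrow> (pv$j, v$j)))"

definition cross2 :: "real \<times> real \<Rightarrow> real \<times> real \<Rightarrow> real" where
  "cross2 a b = fst a * snd b - snd a * fst b"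

definition Obs :: "'p + 'q \<Rightarrow> 'p + 'q \<Rightarrow> ('p::finite,'q::finite) pt \<Rightarrow> real" where
  "Obs k j x = cross2 (xvec x k) (xvec x j)"

text \<open>A_class: the (unital real) algebra of functions generated by the O_kj
  (functions on M_reg are represented by gauge-invariant functions evaluated at representatives).\<close>
inductive_set A_class :: "(('p::finite,'q::finite) pt \<Rightarrow> real) set" where
  gen: "Obs k j \<in> A_class"
| const: "(\<lambda>_. c) \<in> A_class"
| add: "f \<in> A_class \<Longrightarrow> g \<in> A_class \<Longrightarrow> (\<lambda>x. f x + g x) \<in> A_class"
| mult: "f \<in> A_class \<Longrightarrow> g \<in> A_class \<Longrightarrow> (\<lambda>x. f x * g x) \<in> A_class"

definition in_M :: "'p \<Rightarrow> ('p::finite,'q::finite) pt \<Rightarrow> bool" where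
  "in_M i x \<longleftrightarrow> x \<in> Gamma_reg \<and> (\<exists>g. det g = 1 \<and>
     (case sl2_act g x of (u,pp,v,pv) \<Rightarrow>
        u \<bullet> u = pp \<bullet> pp \<and> pp \<bullet> pp = v \<bullet> v \<and> v \<bullet> v = pv \<bullet> pv \<and> u \<bullet> u > 0 \<and>
        u \<bullet> pp = 0 \<and> v \<bullet> pv = 0 \<and> (u$i)^2 + (pp$i)^2 > 0))"

end

theory Submission
  imports Defs
begin

lemma minor_nonzero:
  fixes u pp :: "real^'p::finite"
  assumes "lin_indep2 u pp"
  shows "\<exists>i j. u$i * pp$j - pp$i * u$j \<noteq> 0"
proof (rule ccontr)
  assume H: "\<not> ?thesis"
  have "u \<noteq> 0"
  proof
    assume "u = 0"
    hence "1 *\<^sub>R u + 0 *\<^sub>R pp = 0" by simp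
    with assms show False unfolding lin_indep2_def by fastforce
  qed
  then obtain k where k: "u$k \<noteq> 0" by (metis vec_eq_iff zero_index)
  have "(pp$k / u$k) *\<^sub>R u + (-1) *\<^sub>R pp = 0"
  proof (subst vec_eq_iff, intro allI)
    fix j
    have "u$k * pp$j - pp$k * u$j = 0" using H by auto
    thus "((pp$k / u$k) *\<^sub>R u + (-1) *\<^sub>R pp) $ j = 0 $ j"
      using k by (simp add: field_simps)
  qed
  with assms show False unfolding lin_indep2_def by fastforce
qed

lemma norm_lemma:
  fixes u pp :: "real^'p::finite" and v pv :: "real^'q::finite"
  assumes e1: "pp \<bullet> pp = v \<bullet> v" and e2: "pv \<bullet> pv = u \<bullet> u" and e3: "u \<bullet> pp = v \<bullet> pv"
    and li: "lin_indep2 u pp" and nz: "u$i \<noteq> 0 \<or> pp$i \<noteq> 0"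
  shows "\<exists>g. det g = 1 \<and>
     (case sl2_act g (u,pp,v,pv) of (u,pp,v,pv) \<Rightarrow>
        u \<bullet> u = pp \<bullet> pp \<and> pp \<bullet> pp = v \<bullet> v \<and> v \<bullet> v = pv \<bullet> pv \<and> u \<bullet> u > 0 \<and>
        u \<bullet> pp = 0 \<and> v \<bullet> pv = 0 \<and> (u$i)^2 + (pp$i)^2 > 0)"
proof -
  define A where "A = u \<bullet> u"
  define B where "B = pp \<bullet> pp"
  define C where "C = u \<bullet> pp"
  define D where "D = A * B - C^2"
  have "u \<noteq> 0"
  proof
    assume "u = 0"
    hence "1 *\<^sub>R u + 0 *\<^sub>R pp = 0" by simp
    with li show False unfolding lin_indep2_def by fastforce
  qed
  hence Apos: "A > 0" unfolding A_def by simp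
  define w where "w = A *\<^sub>R pp - C *\<^sub>R u"
  have "w \<noteq> 0"
  proof
    assume "w = 0"
    hence "(- C) *\<^sub>R u + A *\<^sub>R pp = 0" unfolding w_def by (simp add: algebra_simps)
    with li Apos show False unfolding lin_indep2_def by fastforce
  qed
  hence "w \<bullet> w > 0" by simp
  moreover have "w \<bullet> w = A * D"
    unfolding w_def D_def A_def B_def C_def
    by (simp add: inner_diff_left inner_diff_right inner_commute power2_eq_square algebra_simps)
  ultimately have Dpos: "D > 0" using Apos by (simp add: zero_less_mult_iff)
  define \<alpha> where "\<alpha> = sqrt (sqrt D / A)"
  define \<beta> where "\<beta> = 1 / \<alpha>"
  have apos: "\<alpha> > 0" unfolding \<alpha>_def using Apos Dpos by simp
  have a2: "\<alpha>^2 = sqrt D / A" unfolding \<alpha>_def using Apos Dpos by simp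
  have b2: "\<beta>^2 = A / sqrt D" unfolding \<beta>_def using a2 by (simp add: power_divide)
  have sD: "sqrt D * sqrt D = D" using Dpos by simp
  define g :: "real^2^2" where "g = vector [vector [\<alpha>, 0], vector [-\<beta>*C/A, \<beta>]]"
  have detg: "det g = 1" unfolding g_def det_2 \<beta>_def using apos by simp
  define u' where "u' = \<alpha> *\<^sub>R u"
  define p' where "p' = \<beta> *\<^sub>R (pp - (C/A) *\<^sub>R u)"
  define v' where "v' = \<beta> *\<^sub>R (v - (C/A) *\<^sub>R pv)"
  define pv' where "pv' = \<alpha> *\<^sub>R pv"
  have act: "sl2_act g (u,pp,v,pv) = (u', p', v', pv')"
    unfolding sl2_act_def g_def u'_def p'_def v'_def pv'_def
    by (simp add: vec_eq_iff algebra_simps)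
  have "u' \<bullet> u' = \<alpha>^2 * A" by (simp add: u'_def A_def power2_eq_square)
  hence i1: "u' \<bullet> u' = sqrt D" using a2 Apos by simp
  have "pv' \<bullet> pv' = \<alpha>^2 * A" by (simp add: pv'_def e2 A_def power2_eq_square)
  hence i4: "pv' \<bullet> pv' = sqrt D" using a2 Apos by simp
  have "p' \<bullet> p' = \<beta>^2 * (B - C^2/A)"
    unfolding p'_def A_def B_def C_def
    by (simp add: inner_diff_left inner_diff_right inner_commute power2_eq_square field_simps)
  also have "\<dots> = \<beta>^2 * (D / A)" unfolding D_def using Apos by (simp add: field_simps)
  also have "\<dots> = sqrt D" unfolding b2 using Apos sD Dpos
    by (simp add: field_simps)
  finally have i2: "p' \<bullet> p' = sqrt D" .
  have "v' \<bullet> v' = \<beta>^2 * (B - C^2/A)"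
    unfolding v'_def A_def B_def C_def
    using e1 e2 e3
    by (simp add: inner_diff_left inner_diff_right inner_commute power2_eq_square field_simps)
  also have "\<dots> = sqrt D" using calculation i2 \<open>p' \<bullet> p' = \<beta>^2 * (B - C^2/A)\<close> by simp
  finally have i3: "v' \<bullet> v' = sqrt D" .
  have o1: "u' \<bullet> p' = 0" unfolding u'_def p'_def
    using Apos by (simp add: inner_diff_right inner_commute A_def C_def)
  have "v' \<bullet> pv' = \<alpha> * \<beta> * (v \<bullet> pv - (C/A) * (pv \<bullet> pv))" unfolding v'_def pv'_def
    by (simp add: inner_diff_left algebra_simps)
  hence o2: "v' \<bullet> pv' = 0" using Apos unfolding e2 e3[symmetric] A_def[symmetric] C_def[symmetric]
    by simp
  have c: "(u'$i)^2 + (p'$i)^2 > 0"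
  proof (cases "u$i = 0")
    case True
    with nz have "pp$i \<noteq> 0" by simp
    hence "p'$i \<noteq> 0" unfolding p'_def using True apos \<beta>_def by simp
    thus ?thesis by (simp add: add_nonneg_pos)
  next
    case False
    hence "u'$i \<noteq> 0" unfolding u'_def using apos by simp
    thus ?thesis by (simp add: add_pos_nonneg)
  qed
  show ?thesis
    apply (rule exI[of _ g])
    unfolding act prod.case using detg i1 i2 i3 i4 o1 o2 c Dpos
    by (metis real_sqrt_gt_zero)
qed

theorem mainTheorem4:
  fixes a b :: "('p::finite,'q::finite) pt"
  assumes "CARD('p) \<ge> 2" and "CARD('q) \<ge> 2"
    and "a \<in> Gamma_reg" and "b \<in> Gamma_reg"
    and "\<not> (\<exists>i::'p. in_M i a \<and> in_M i b)"
  shows "\<exists>f \<in> A_class. f a \<noteq> f b"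
proof (rule ccontr)
  assume H: "\<not> ?thesis"
  have inM: "in_M i x" if "x \<in> Gamma_reg" "fst x $ i \<noteq> 0 \<or> fst (snd x) $ i \<noteq> 0" for i and x :: "('p,'q) pt"
  proof -
    obtain u pp v pv where x: "x = (u,pp,v,pv)" by (cases x) auto
    have "pp \<bullet> pp = v \<bullet> v" "pv \<bullet> pv = u \<bullet> u" "u \<bullet> pp = v \<bullet> pv" "lin_indep2 u pp"
      using that(1) unfolding x Gamma_reg_def Gamma_bar_def H1_def H2_def Dc_def by auto
    from norm_lemma[OF this] that(2) show ?thesis
      unfolding in_M_def using that(1) x by auto
  qed
  obtain u pp v pv where a: "a = (u,pp,v,pv)" by (cases a) auto
  have "lin_indep2 u pp" using assms(3) unfolding a Gamma_reg_def by auto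
  then obtain i j where ij: "u$i * pp$j - pp$i * u$j \<noteq> 0" using minor_nonzero by blast
  have "Obs (Inl i) (Inl j) a = Obs (Inl i) (Inl j) b" using H A_class.gen by blast
  hence ob: "Obs (Inl i) (Inl j) b \<noteq> 0" using ij unfolding Obs_def xvec_def cross2_def a by simp
  obtain u2 pp2 v2 pv2 where b: "b = (u2,pp2,v2,pv2)" by (cases b) auto
  have "u$i \<noteq> 0 \<or> pp$i \<noteq> 0" using ij by auto
  hence "in_M i a" using inM assms(3) a by auto
  moreover have "u2$i \<noteq> 0 \<or> pp2$i \<noteq> 0" using ob unfolding Obs_def xvec_def cross2_def b by auto
  hence "in_M i b" using inM assms(4) b by auto
  ultimately show False using assms(5) by blast
qed

end
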